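(* Assume (A) and (N) hold with $\omega_A<0$, and let $G:H_0\to H$ be globally Lipschitz continuous. Then for every $\omega\in\Omega$, $\xi\in H_0$ and every $\tau>0$ the random equation $$\mathrm{d}V(t)=AV(t)\,\mathrm{d}t+G(V(t)+Y_{\theta_t\omega}(0))\,\mathrm{d}t,\quad t\in[0,\tau],\qquad V(0)=\xi-Y_\omega(0),$$ admits a unique integrated (mild) solution $V\in C([0,\tau],H_0)$, i.e. a unique $V\in C([0,\tau],H_0)$ with $$V(t)=T_0(t)(\xi-Y_\omega(0))+\int_0^t(-A_0)^\beta T_0(t-s)(-A)^{-\beta}G(V(s)+Y_{\theta_s\omega}(0))\,\mathrm{d}s,\quad t\in[0,\tau],$$ where $\beta\in(1-1/p^*,1)$.
   Context: Let $H$ be a separable Hilbert space and $A:D(A)\subset H\to H$ a linear operator with $H_0:=\overline{D(A)}\neq H$. The part of $A$ in $H_0$ is $A_0y:=Ay$ on $D(A_0):=\{y\in D(A):Ay\in H_0\}$. Assumption (A): (a) $A_0$ is sectorial on $H_0$, i.e. there are $\bar\omega\in\mathbb{R}$, $\vartheta\in(\pi/2,\pi)$, $\bar M>0$ with $\rho(A_0)\supset S_\vartheta:=\{z\in\mathbb{C}\setminus\{\bar\omega\}:|\arg(z-\bar\omega)|\le\vartheta\}$ and $\|(\lambda-A_0)^{-1}\|\le\bar M/|\lambda-\bar\omega|$ for $\lambda\in S_\vartheta$; (b) there exist $\omega_A\in\mathbb{R}$ and $p^*\in[1,\infty)$ with $(\omega_A,\infty)\subset\rho(A)$ and $\limsup_{\lambda\to+\infty}\lambda^{1/p^*}\|(\lambda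 I-A)^{-1}\|_{\mathcal{L}(H)}<\infty$. Under (A), $A_0$ generates an analytic $C_0$-semigroup $(T_0(t))_{t\ge0}$ on $H_0$ and $A$ generates the integrated semigroup $S_A(t)=(\nu I-A_0)\int_0^tT_0(s)\,\mathrm{d}s\,(\nu I-A)^{-1}$ ($\nu>\omega_A$); for $t>0$, $S_A'(t)x=(-A_0)^\beta T_0(t)(-A)^{-\beta}x$ ($x\in H$, $\beta\in(1-1/p^*,1)$), with $\|(-A)^{-\beta}\|<\infty$ and $\|(-A_0)^\beta T_0(t)\|\le M_\beta t^{-\beta}e^{\omega_At}$. Assumption (N): $(\Omega,\mathcal{F},\mathbb{P},(\theta_t)_{t\in\mathbb{R}})$ is an ergodic metric dynamical system (measurable $\mathbb{P}$-preserving maps, jointly measurable in $(t,\omega)$, $\theta_0=\mathrm{id}$, $\theta_{t+s}=\theta_t\circ\theta_s$, invariant sets of probability $0$ or $1$), and $W$ is a two-sided $Q$-Wiener process on $H$ ($Q$ trace class) with $W_t(\theta_s\omega)=W_{t+s}(\omega)-W_s(\omega)$. For $\omega_A<0$, $Y_\omega(t):=\int_{-\infty}^tS_A'(t-\tau)\,\mathrm{d}W(\tau)$, a continuous $H_0$-valued process, and $Y_{\theta_s\omega}(0)=Y_\omega(s)$. *)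

theory Defs
  imports "HOL-Probability.Probability"
begin

definition ergodic_mds :: "'w measure \<Rightarrow> (real \<Rightarrow> 'w \<Rightarrow> 'w) \<Rightarrow> bool" where
  "ergodic_mds P \<theta> \<longleftrightarrow>
     prob_space P \<and>
     (\<forall>t. \<theta> t \<in> measurable P P \<and> distr P P (\<theta> t) = P) \<and>
     (\<lambda>(t, w). \<theta> t w) \<in> measurable (borel \<Otimes>\<^sub>M P) P \<and>
     (\<forall>w \<in> space P. \<theta> 0 w = w) \<and>
     (\<forall>t s. \<forall>w \<in> space P. \<theta> (t + s) w = \<theta> t (\<theta> s w)) \<and>
     (\<forall>A \<in> sets P. (\<forall>t. \<theta> t -` A \<inter> space P = A) \<longrightarrow>
                      measure P A = 0 \<or> measure P A = 1)"

text \<open>\<open>T0\<close> is a strongly continuous semigroup of bounded linear operators on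
  the closed subspace \<open>H0\<close> (operators are given on the whole space, only their
  action on \<open>H0\<close> matters).\<close>
definition c0_semigroup_on :: "'a::real_normed_vector set \<Rightarrow> (real \<Rightarrow> 'a \<Rightarrow> 'a) \<Rightarrow> bool" where
  "c0_semigroup_on H0 T0 \<longleftrightarrow>
     (\<forall>t\<ge>0. bounded_linear (T0 t) \<and> T0 t ` H0 \<subseteq> H0) \<and>
     (\<forall>x\<in>H0. T0 0 x = x) \<and>
     (\<forall>t\<ge>0. \<forall>s\<ge>0. \<forall>x\<in>H0. T0 (t + s) x = T0 t (T0 s x)) \<and>
     (\<forall>x\<in>H0. continuous_on {0..} (\<lambda>t. T0 t x))"

text \<open>Integrated (mild) solution on \<open>[0,\<tau>]\<close> of
  \<open>V(t) = T0(t)(\<xi> - Y_\<omega>(0)) + \<integral>_0^t Sd(t-s) G(V(s) + Y_{\<theta>_s \<omega>}(0)) ds\<close>,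
  where \<open>Sd t = (-A0)^\<beta> T0(t) (-A)^(-\<beta>) = S_A'(t)\<close>.\<close>
definition mild_solution ::
  "'a::{banach, second_countable_topology} set \<Rightarrow> (real \<Rightarrow> 'a \<Rightarrow> 'a) \<Rightarrow> (real \<Rightarrow> 'a \<Rightarrow> 'a)
   \<Rightarrow> ('a \<Rightarrow> 'a) \<Rightarrow> ('w \<Rightarrow> real \<Rightarrow> 'a) \<Rightarrow> (real \<Rightarrow> 'w \<Rightarrow> 'w) \<Rightarrow> 'w \<Rightarrow> 'a \<Rightarrow> real
   \<Rightarrow> (real \<Rightarrow> 'a) \<Rightarrow> bool" where
  "mild_solution H0 T0 Sd G Y \<theta> \<omega> \<xi> \<tau> V \<longleftrightarrow>
     continuous_on {0..\<tau>} V \<and> V ` {0..\<tau>} \<subseteq> H0 \<and>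
     (\<forall>t\<in>{0..\<tau>}.
        set_integrable lborel {0..t} (\<lambda>s. Sd (t - s) (G (V s + Y (\<theta> s \<omega>) 0))) \<and>
        V t = T0 t (\<xi> - Y \<omega> 0)
              + (LINT s:{0..t}|lborel. Sd (t - s) (G (V s + Y (\<theta> s \<omega>) 0))))"

end

theory Submission
  imports Defs
begin

lemma integral_in_closed_subspace:
  fixes f :: "'b \<Rightarrow> 'a::{banach, second_countable_topology}"
  assumes S: "subspace S" "closed S" and int: "integrable M f"
    and fS: "\<And>x. x \<in> space M \<Longrightarrow> f x \<in> S"
  shows "integral\<^sup>L M f \<in> S"
proof -
  have S0: "0 \<in> S" using S(1) by (rule subspace_0)
  then have Sne: "S \<noteq> {}" by auto
  define r where "r v = (SOME w. w \<in> S \<and> dist v w \<le> 2 * infdist v S)" for v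
  have r: "r v \<in> S \<and> dist v (r v) \<le> 2 * infdist v S" for v
  proof -
    have "\<exists>w. w \<in> S \<and> dist v w \<le> 2 * infdist v S"
    proof (cases "v \<in> S")
      case True then show ?thesis by (intro exI[of _ v]) (auto simp: infdist_nonneg)
    next
      case False
      then have pos: "infdist v S > 0" using infdist_pos_not_in_closed[OF S(2) Sne] by auto
      then have "(INF a\<in>S. dist v a) < 2 * infdist v S" using infdist_notempty[OF Sne] by simp
      then obtain w where "w \<in> S" "dist v w < 2 * infdist v S"
        by (subst (asm) cINF_less_iff) (use Sne in \<open>auto intro: bdd_belowI[of _ 0]\<close>)
      then show ?thesis by (intro exI[of _ w]) auto
    qed
    then show ?thesis unfolding r_def by (rule someI_ex)
  qed
  have fm: "f \<in> borel_measurable M" using int by (rule borel_measurable_integrable)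
  from borel_measurable_implies_sequence_metric[OF fm, of 0] obtain s where
    s: "\<And>i. simple_function M (s i)" and
    lim: "\<And>x. x \<in> space M \<Longrightarrow> (\<lambda>i. s i x) \<longlonglongrightarrow> f x" and
    bnd: "\<And>i x. x \<in> space M \<Longrightarrow> norm (s i x) \<le> 2 * norm (f x)"
    by (simp add: dist_norm) metis
  define t where "t i = r \<circ> s i" for i
  have tx: "t i x = r (s i x)" for i x by (simp add: t_def)
  have ts: "simple_function M (t i)" for i
    unfolding t_def by (rule simple_function_compose[OF s])
  have tdist: "dist (t i x) (f x) \<le> 3 * dist (s i x) (f x)" if x: "x \<in> space M" for i x
  proof -
    have a: "dist (t i x) (f x) \<le> dist (s i x) (t i x) + dist (s i x) (f x)"
      by (rule dist_triangle3)
    have b: "dist (s i x) (t i x) \<le> 2 * infdist (s i x) S" using r by (simp add: tx)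
    have c: "infdist (s i x) S \<le> dist (s i x) (f x)" using fS[OF x] by (rule infdist_le)
    from a b c show ?thesis by linarith
  qed
  have tlim: "(\<lambda>i. t i x) \<longlonglongrightarrow> f x" if x: "x \<in> space M" for x
  proof -
    have "(\<lambda>i. dist (s i x) (f x)) \<longlonglongrightarrow> 0" using lim[OF x] by (rule tendsto_dist_iff[THEN iffD1])
    then have l3: "(\<lambda>i. 3 * dist (s i x) (f x)) \<longlonglongrightarrow> 0" by (rule tendsto_mult_right_zero)
    have ev: "\<forall>i. norm (dist (t i x) (f x)) \<le> 3 * dist (s i x) (f x)" using tdist[OF x] by simp
    have "(\<lambda>i. dist (t i x) (f x)) \<longlonglongrightarrow> 0"
      by (rule Lim_null_comparison[OF always_eventually[OF ev] l3])
    then show ?thesis by (rule tendsto_dist_iff[THEN iffD2])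
  qed
  have tbnd: "norm (t i x) \<le> 10 * norm (f x)" if x: "x \<in> space M" for i x
  proof -
    have a: "norm (t i x) \<le> norm (f x) + norm (t i x - f x)" by (rule norm_triangle_sub)
    have b: "norm (s i x - f x) \<le> norm (s i x) + norm (f x)" by (rule norm_triangle_ineq4)
    have c: "norm (t i x - f x) \<le> 3 * norm (s i x - f x)" using tdist[OF x, of i] by (simp add: dist_norm)
    from a b c bnd[OF x, of i] show ?thesis by linarith
  qed
  have tm: "t i \<in> borel_measurable M" for i
    using ts by (rule borel_measurable_simple_function)
  have wint: "integrable M (\<lambda>x. 10 * norm (f x))" using int by auto
  have tint: "integrable M (t i)" for i
    by (rule Bochner_Integration.integrable_bound[OF wint tm]) (auto intro!: AE_I2 simp: tbnd)
  have tS: "integral\<^sup>L M (t i) \<in> S" for i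
  proof -
    have sbi: "Bochner_Integration.simple_bochner_integrable M (t i)"
      using ts[of i] tint[of i] by (intro simple_bochner_integrableI_bounded) (auto simp: integrable_iff_bounded)
    have "Bochner_Integration.simple_bochner_integral M (t i) \<in> S"
      unfolding Bochner_Integration.simple_bochner_integral_def
      by (intro subspace_sum[OF S(1)] subspace_scale[OF S(1)]) (auto simp: tx r)
    then show ?thesis using Bochner_Integration.simple_bochner_integrable_eq_integral[OF sbi] by simp
  qed
  have "(\<lambda>i. integral\<^sup>L M (t i)) \<longlonglongrightarrow> integral\<^sup>L M f"
    by (rule integral_dominated_convergence[OF fm tm wint])
       (auto intro!: AE_I2 simp: tlim tbnd)
  moreover have "\<forall>x l. (\<forall>n. x n \<in> S) \<and> x \<longlonglongrightarrow> l \<longrightarrow> l \<in> S"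
    using S(2) by (simp add: closed_sequential_limits)
  ultimately show ?thesis using tS by (metis (no_types, lifting))
qed

lemma powr_set_integrable:
  fixes a t :: real
  assumes a: "a < 1" and t: "0 \<le> t"
  shows "set_integrable lborel {0..t} (\<lambda>u. u powr (-a))"
    and "(LINT u:{0..t}|lborel. u powr (-a)) = t powr (1 - a) / (1 - a)"
proof -
  have hi: "((\<lambda>u. u powr (-a)) has_integral (t powr (-a + 1) / (-a + 1))) {0..t}"
    by (rule has_integral_powr_from_0) (use a t in auto)
  then have "(\<lambda>u. u powr (-a)) integrable_on {0..t}" by blast
  then have "(\<lambda>u. u powr (-a)) absolutely_integrable_on {0..t}"
    by (rule nonnegative_absolutely_integrable_1) auto
  then have i1: "integrable lebesgue (\<lambda>u. indicator {0..t} u *\<^sub>R u powr (-a))"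
    by (simp add: absolutely_integrable_on_def set_integrable_def)
  have m: "(\<lambda>u. indicator {0..t} u *\<^sub>R u powr (-a)) \<in> borel_measurable lborel"
    by measurable
  from i1 show si: "set_integrable lborel {0..t} (\<lambda>u. u powr (-a))"
    unfolding set_integrable_def using integrable_completion[OF m] by simp
  have "(LINT u:{0..t}|lborel. u powr (-a)) = integral {0..t} (\<lambda>u. u powr (-a))"
    by (rule set_borel_integral_eq_integral(2)[OF si])
  also have "\<dots> = t powr (-a + 1) / (-a + 1)" using hi by (rule integral_unique)
  finally show "(LINT u:{0..t}|lborel. u powr (-a)) = t powr (1 - a) / (1 - a)" by simp
qed

locale kern =
  fixes H0 :: "'a::{banach, second_countable_topology} set" and Sd :: "real \<Rightarrow> 'a \<Rightarrow> 'a"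
    and K \<beta> :: real
  assumes H0: "subspace H0" "closed H0"
    and beta: "0 < \<beta>" "\<beta> < 1" and K: "0 \<le> K"
    and Sd_lin: "\<And>t. t > 0 \<Longrightarrow> bounded_linear (Sd t)"
    and Sd_range: "\<And>t x. t > 0 \<Longrightarrow> Sd t x \<in> H0"
    and Sd_bnd: "\<And>t x. t > 0 \<Longrightarrow> norm (Sd t x) \<le> K * t powr (-\<beta>) * norm x"
    and Sd_cont: "\<And>x. continuous_on {0<..} (\<lambda>t. Sd t x)"
begin

lemma Sd_diff: "t > 0 \<Longrightarrow> Sd t (x - y) = Sd t x - Sd t y"
  using Sd_lin[of t] by (simp add: linear_simps)

lemma cont_comp:
  assumes h: "continuous_on {0<..} h"
  shows "continuous_on {0<..} (\<lambda>u. Sd u (h u))"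
  unfolding continuous_on_def
proof
  fix u0 :: real assume u0: "u0 \<in> {0<..}"
  let ?F = "at u0 within {0<..}"
  have ev: "eventually (\<lambda>u. u \<in> {0<..}) ?F"
    by (rule eventually_at_topological[THEN iffD2]) (use u0 in \<open>auto intro!: exI[of _ "{0<..}"]\<close>)
  have hl: "(h \<longlongrightarrow> h u0) ?F" using h u0 by (simp add: continuous_on_def)
  have b1: "((\<lambda>u. K * u powr (-\<beta>) * norm (h u - h u0)) \<longlongrightarrow> K * u0 powr (-\<beta>) * norm (h u0 - h u0)) ?F"
    using u0 by (intro tendsto_intros hl) auto
  have t1: "((\<lambda>u. Sd u (h u - h u0)) \<longlongrightarrow> 0) ?F"
  proof (rule Lim_null_comparison)
    show "eventually (\<lambda>u. norm (Sd u (h u - h u0)) \<le> K * u powr (-\<beta>) * norm (h u - h u0)) ?F"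
      using ev by eventually_elim (rule Sd_bnd, simp)
    show "((\<lambda>u. K * u powr (-\<beta>) * norm (h u - h u0)) \<longlongrightarrow> 0) ?F" using b1 by simp
  qed
  have t2: "((\<lambda>u. Sd u (h u0)) \<longlongrightarrow> Sd u0 (h u0)) ?F"
    using Sd_cont[of "h u0"] u0 by (simp add: continuous_on_def)
  have "((\<lambda>u. Sd u (h u - h u0) + Sd u (h u0)) \<longlongrightarrow> 0 + Sd u0 (h u0)) ?F"
    by (rule tendsto_add[OF t1 t2])
  then have t3: "((\<lambda>u. Sd u (h u - h u0) + Sd u (h u0)) \<longlongrightarrow> Sd u0 (h u0)) ?F" by simp
  show "((\<lambda>u. Sd u (h u)) \<longlongrightarrow> Sd u0 (h u0)) ?F"
  proof (rule Lim_transform_eventually[OF t3])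
    show "eventually (\<lambda>u. Sd u (h u - h u0) + Sd u (h u0) = Sd u (h u)) ?F"
      using ev by eventually_elim (simp add: Sd_diff)
  qed
qed

lemma meas:
  assumes g: "continuous_on UNIV g"
  shows "(\<lambda>u. indicator {0..t} u *\<^sub>R Sd u (g (t - u))) \<in> borel_measurable borel"
proof -
  have c: "continuous_on {0<..t} (\<lambda>u. Sd u (g (t - u)))"
    by (rule continuous_on_subset[OF cont_comp]) (auto intro!: continuous_intros continuous_on_compose2[OF g])
  have [measurable]: "(\<lambda>u. indicator {0<..t} u *\<^sub>R Sd u (g (t - u))) \<in> borel_measurable borel"
    by (rule borel_measurable_continuous_on_indicator[OF _ c]) auto
  have "(\<lambda>u. if u = 0 then indicator {0..t} (0::real) *\<^sub>R Sd 0 (g t)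
           else indicator {0<..t} u *\<^sub>R Sd u (g (t - u))) \<in> borel_measurable borel"
    by measurable
  also have "(\<lambda>u. if u = 0 then indicator {0..t} (0::real) *\<^sub>R Sd 0 (g t)
           else indicator {0<..t} u *\<^sub>R Sd u (g (t - u))) = (\<lambda>u. indicator {0..t} u *\<^sub>R Sd u (g (t - u)))"
    by (auto simp: fun_eq_iff indicator_def)
  finally show ?thesis .
qed


lemma int_bound:
  assumes g: "continuous_on UNIV g" and t: "0 \<le> t" and a: "a < 1"
    and bnd: "\<And>u. 0 < u \<Longrightarrow> u \<le> t \<Longrightarrow> norm (Sd u (g (t - u))) \<le> C * u powr (-a)"
  shows "set_integrable lborel {0..t} (\<lambda>u. Sd u (g (t - u)))"
    and "norm (LINT u:{0..t}|lborel. Sd u (g (t - u))) \<le> C * (t powr (1 - a) / (1 - a))"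
proof -
  let ?f = "\<lambda>u. indicator {0..t} u *\<^sub>R Sd u (g (t - u))"
  let ?w = "\<lambda>u. C * (indicator {0..t} u *\<^sub>R u powr (-a))"
  have wi: "integrable lborel ?w"
    using powr_set_integrable(1)[OF a t] unfolding set_integrable_def by (rule integrable_mult_right)
  have ae: "AE u in lborel. norm (?f u) \<le> ?w u"
    using AE_lborel_singleton[of 0] by eventually_elim (auto simp: indicator_def bnd)
  have fm: "?f \<in> borel_measurable lborel" using meas[OF g] by simp
  have fi: "integrable lborel ?f"
    by (rule Bochner_Integration.integrable_bound[OF wi fm]) (use ae in \<open>eventually_elim, auto\<close>)
  then show "set_integrable lborel {0..t} (\<lambda>u. Sd u (g (t - u)))" by (simp add: set_integrable_def)
  have "norm (LINT u:{0..t}|lborel. Sd u (g (t - u))) = norm (integral\<^sup>L lborel ?f)"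
    by (simp add: set_lebesgue_integral_def)
  also have "\<dots> \<le> integral\<^sup>L lborel (\<lambda>u. norm (?f u))" by (rule integral_norm_bound)
  also have "\<dots> \<le> integral\<^sup>L lborel ?w"
    by (rule integral_mono_AE[OF integrable_norm[OF fi] wi ae])
  also have "\<dots> = C * (LINT u:{0..t}|lborel. u powr (-a))"
    by (simp add: set_lebesgue_integral_def)
  also have "\<dots> = C * (t powr (1 - a) / (1 - a))" using powr_set_integrable(2)[OF a t] by simp
  finally show "norm (LINT u:{0..t}|lborel. Sd u (g (t - u))) \<le> C * (t powr (1 - a) / (1 - a))" .
qed


lemma subst_eq:
  fixes g :: "real \<Rightarrow> 'a"
  shows "integrable lborel (\<lambda>s. indicator {0..t} s *\<^sub>R Sd (t - s) (g s)) \<longleftrightarrow>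
         integrable lborel (\<lambda>u. indicator {0..t} u *\<^sub>R Sd u (g (t - u)))"
    and "(LINT s:{0..t}|lborel. Sd (t - s) (g s)) = (LINT u:{0..t}|lborel. Sd u (g (t - u)))"
proof -
  let ?F = "\<lambda>s. indicator {0..t} s *\<^sub>R Sd (t - s) (g s)"
  have eq: "(\<lambda>x. ?F (t + (-1) * x)) = (\<lambda>u. indicator {0..t} u *\<^sub>R Sd u (g (t - u)))"
    by (auto simp: fun_eq_iff indicator_def)
  show "integrable lborel ?F \<longleftrightarrow> integrable lborel (\<lambda>u. indicator {0..t} u *\<^sub>R Sd u (g (t - u)))"
    using lborel_integrable_real_affine_iff[of "-1" ?F t] by (simp only: eq)
  show "(LINT s:{0..t}|lborel. Sd (t - s) (g s)) = (LINT u:{0..t}|lborel. Sd u (g (t - u)))"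
    using lborel_integral_real_affine[of "-1" ?F t] unfolding set_lebesgue_integral_def
    by (simp only: eq) simp
qed

lemma conv_in_H0:
  assumes g: "continuous_on UNIV g" and si: "set_integrable lborel {0..t} (\<lambda>u. Sd u (g (t - u)))"
  shows "(LINT u:{0..t}|lborel. Sd u (g (t - u))) \<in> H0"
proof -
  let ?f = "\<lambda>u. indicator {0..t} u *\<^sub>R Sd u (g (t - u))"
  let ?f' = "\<lambda>u. if u = 0 then 0 else ?f u"
  have [measurable]: "?f \<in> borel_measurable borel" by (rule meas[OF g])
  have m': "?f' \<in> borel_measurable lborel" by measurable
  have m: "?f \<in> borel_measurable lborel" by measurable
  have ae: "AE u in lborel. ?f u = ?f' u"
    using AE_lborel_singleton[of 0] by eventually_elim auto
  have i: "integrable lborel ?f" using si by (simp add: set_integrable_def)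
  have i': "integrable lborel ?f'" using integrable_cong_AE[OF m m' ae] i by simp
  have "integral\<^sup>L lborel ?f' \<in> H0"
  proof (rule integral_in_closed_subspace[OF H0 i'])
    fix u :: real
    show "?f' u \<in> H0"
      using Sd_range[of u] subspace_0[OF H0(1)] subspace_scale[OF H0(1)]
      by (auto simp: indicator_def)
  qed
  then show ?thesis using integral_cong_AE[OF m m' ae] by (simp add: set_lebesgue_integral_def)
qed

lemma conv_cont:
  assumes g: "continuous_on UNIV g" and tau: "0 \<le> \<tau>"
  shows "continuous_on {0..\<tau>} (\<lambda>t. LINT u:{0..t}|lborel. Sd u (g (t - u)))"
proof (rule continuous_on_sequentiallyI)
  fix x :: "nat \<Rightarrow> real" and a
  assume xs: "\<forall>n. x n \<in> {0..\<tau>}" and a: "a \<in> {0..\<tau>}" and lim: "x \<longlonglongrightarrow> a"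
  have "compact (g ` {0..\<tau>})"
    by (rule compact_continuous_image[OF continuous_on_subset[OF g]]) auto
  then obtain B where B: "B > 0" "\<And>y. y \<in> g ` {0..\<tau>} \<Longrightarrow> norm y \<le> B"
    using compact_imp_bounded bounded_pos by metis
  have Bg: "norm (g s) \<le> B" if "s \<in> {0..\<tau>}" for s using B(2) that by blast
  have gc: "isCont g z" for z using g by (simp add: continuous_on_eq_continuous_at)
  let ?F = "\<lambda>n u. indicator {0..x n} u *\<^sub>R Sd u (g (x n - u))"
  let ?f = "\<lambda>u. indicator {0..a} u *\<^sub>R Sd u (g (a - u))"
  let ?w = "\<lambda>u. K * B * (indicator {0..\<tau>} u *\<^sub>R u powr (-\<beta>))"
  show "(\<lambda>n. LINT u:{0..x n}|lborel. Sd u (g (x n - u))) \<longlonglongrightarrow> (LINT u:{0..a}|lborel. Sd u (g (a - u)))"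
    unfolding set_lebesgue_integral_def
  proof (rule integral_dominated_convergence[where w = ?w])
    show "?f \<in> borel_measurable lborel" using meas[OF g] by simp
    show "\<And>n. ?F n \<in> borel_measurable lborel" using meas[OF g] by simp
    show "integrable lborel ?w"
      using powr_set_integrable(1)[of \<beta> \<tau>] beta tau unfolding set_integrable_def
      by (intro integrable_mult_right) auto
    show "AE u in lborel. (\<lambda>n. ?F n u) \<longlonglongrightarrow> ?f u"
      using AE_lborel_singleton[of 0] AE_lborel_singleton[of a]
    proof eventually_elim
      fix u :: real assume u0: "u \<noteq> 0" and ua: "u \<noteq> a"
      consider "u < 0" | "a < u" | "0 < u \<and> u < a" using u0 ua by linarith
      then show "(\<lambda>n. ?F n u) \<longlonglongrightarrow> ?f u"
      proof cases
        case 1 then show ?thesis by (simp add: indicator_def)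
      next
        case 2
        have "eventually (\<lambda>n. x n < u) sequentially" by (rule order_tendstoD(2)[OF lim 2])
        then have "eventually (\<lambda>n. 0 = ?F n u) sequentially"
          by eventually_elim (simp add: indicator_def)
        then have "(\<lambda>n. ?F n u) \<longlonglongrightarrow> 0" by (rule Lim_transform_eventually[OF tendsto_const])
        then show ?thesis using 2 by (simp add: indicator_def)
      next
        case 3
        have "eventually (\<lambda>n. u < x n) sequentially" using 3 by (intro order_tendstoD(1)[OF lim]) auto
        then have ev: "eventually (\<lambda>n. Sd u (g (x n - u)) = ?F n u) sequentially"
          by eventually_elim (use 3 in \<open>simp add: indicator_def\<close>)
        have "(\<lambda>n. g (x n - u)) \<longlonglongrightarrow> g (a - u)"
          by (rule isCont_tendsto_compose[OF gc tendsto_diff[OF lim tendsto_const]])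
        then have "(\<lambda>n. Sd u (g (x n - u))) \<longlonglongrightarrow> Sd u (g (a - u))"
          using 3 by (intro bounded_linear.tendsto[OF Sd_lin]) auto
        then have "(\<lambda>n. ?F n u) \<longlonglongrightarrow> Sd u (g (a - u))" by (rule Lim_transform_eventually[OF _ ev])
        then show ?thesis using 3 by (simp add: indicator_def)
      qed
    qed
    show "AE u in lborel. norm (?F n u) \<le> ?w u" for n
      using AE_lborel_singleton[of 0]
    proof eventually_elim
      fix u :: real assume u0: "u \<noteq> 0"
      show "norm (?F n u) \<le> ?w u"
      proof (cases "u \<in> {0..x n}")
        case True
        then have u: "0 < u" "u \<le> x n" "x n \<le> \<tau>" using u0 xs by auto
        have "norm (?F n u) = norm (Sd u (g (x n - u)))" using True by simp
        also have "\<dots> \<le> K * u powr (-\<beta>) * norm (g (x n - u))" using Sd_bnd u by simp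
        also have "\<dots> \<le> K * u powr (-\<beta>) * B"
          using Bg[of "x n - u"] u K by (intro mult_left_mono) auto
        also have "\<dots> = ?w u" using u by (simp add: indicator_def)
        finally show ?thesis .
      next
        case False
        then have "norm (?F n u) = 0" by simp
        moreover have "0 \<le> ?w u" using K B by (simp add: indicator_def)
        ultimately show ?thesis by linarith
      qed
    qed
  qed
qed


lemma set_int_bound_powr:
  fixes h :: "real \<Rightarrow> 'a"
  assumes si: "set_integrable lborel {0..t} h" and t: "0 \<le> t" and a: "a < 1"
    and bnd: "\<And>u. 0 < u \<Longrightarrow> u \<le> t \<Longrightarrow> norm (h u) \<le> C * u powr (-a)"
  shows "norm (LINT u:{0..t}|lborel. h u) \<le> C * (t powr (1 - a) / (1 - a))"
proof -
  let ?f = "\<lambda>u. indicator {0..t} u *\<^sub>R h u"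
  let ?w = "\<lambda>u. C * (indicator {0..t} u *\<^sub>R u powr (-a))"
  have wi: "integrable lborel ?w"
    using powr_set_integrable(1)[OF a t] unfolding set_integrable_def by (rule integrable_mult_right)
  have ae: "AE u in lborel. norm (?f u) \<le> ?w u"
    using AE_lborel_singleton[of 0] by eventually_elim (auto simp: indicator_def bnd)
  have fi: "integrable lborel ?f" using si by (simp add: set_integrable_def)
  have "norm (LINT u:{0..t}|lborel. h u) = norm (integral\<^sup>L lborel ?f)"
    by (simp add: set_lebesgue_integral_def)
  also have "\<dots> \<le> integral\<^sup>L lborel (\<lambda>u. norm (?f u))" by (rule integral_norm_bound)
  also have "\<dots> \<le> integral\<^sup>L lborel ?w"
    by (rule integral_mono_AE[OF integrable_norm[OF fi] wi ae])
  also have "\<dots> = C * (LINT u:{0..t}|lborel. u powr (-a))"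
    by (simp add: set_lebesgue_integral_def)
  also have "\<dots> = C * (t powr (1 - a) / (1 - a))" using powr_set_integrable(2)[OF a t] by simp
  finally show ?thesis .
qed

end

lemma exp_le_powr:
  fixes x g :: real
  assumes x: "0 < x" and g: "0 < g" "g \<le> 1"
  shows "exp (-x) \<le> x powr (-g)"
proof -
  have "x powr g \<le> 1 + x"
  proof (cases "x \<le> 1")
    case True then have "x powr g \<le> 1" using x g by (intro powr_le1) auto
    then show ?thesis using x by simp
  next
    case False then have "x powr g \<le> x powr 1" using g by (intro powr_mono) auto
    then show ?thesis using x by simp
  qed
  also have "\<dots> \<le> exp x" by (rule exp_ge_add_one_self)
  finally have "x powr g \<le> exp x" .
  then have "1 / exp x \<le> 1 / x powr g" using x by (intro divide_left_mono) auto
  then show ?thesis using x by (simp add: exp_minus powr_minus field_simps)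
qed

locale fp = kern +
  fixes T0 :: "real \<Rightarrow> 'a::{banach, second_countable_topology} \<Rightarrow> 'a" and G :: "'a \<Rightarrow> 'a" and y :: "real \<Rightarrow> 'a" and x0 :: 'a
    and L \<tau> :: real
  assumes T0c: "continuous_on {0..} (\<lambda>t. T0 t x0)" and T0r: "\<And>t. t \<ge> 0 \<Longrightarrow> T0 t x0 \<in> H0"
    and G: "L-lipschitz_on H0 G" and yc: "continuous_on UNIV y" and yr: "\<And>t. y t \<in> H0"
    and tau: "\<tau> > 0"
begin

definition "Phi V t = T0 t x0 + (LINT s:{0..t}|lborel. Sd (t - s) (G (V s + y s)))"
definition "clp t = max 0 (min \<tau> t)"
definition "gf V s = G (V (clp s) + y (clp s))"
definition "goodV V \<longleftrightarrow> continuous_on {0..\<tau>} V \<and> V ` {0..\<tau>} \<subseteq> H0 \<and>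
   (\<forall>t\<in>{0..\<tau>}. set_integrable lborel {0..t} (\<lambda>s. Sd (t - s) (G (V s + y s))) \<and> V t = Phi V t)"

lemma clp_in: "clp t \<in> {0..\<tau>}" using tau by (auto simp: clp_def)
lemma clp_bounds: "0 \<le> clp t" "clp t \<le> \<tau>" using clp_in[of t] by auto
lemma clp_id: "t \<in> {0..\<tau>} \<Longrightarrow> clp t = t" by (auto simp: clp_def)
lemma clp_cont: "continuous_on UNIV clp" unfolding clp_def by (intro continuous_intros)
lemma L_nonneg: "0 \<le> L" using G by (rule lipschitz_on_nonneg)

lemma gf_facts:
  assumes Vc: "continuous_on {0..\<tau>} V" and VH: "V ` {0..\<tau>} \<subseteq> H0"
  shows "continuous_on UNIV (gf V)"
    and "\<exists>B. \<forall>s\<in>{0..\<tau>}. norm (gf V s) \<le> B"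
proof -
  have inH: "V (clp s) + y (clp s) \<in> H0" for s
    using VH clp_in yr subspace_add[OF H0(1)] by blast
  have c1: "continuous_on UNIV (\<lambda>s. V (clp s) + y (clp s))"
    by (intro continuous_on_add continuous_on_compose2[OF Vc clp_cont]
        continuous_on_compose2[OF yc clp_cont]) (auto simp: clp_bounds)
  show gc: "continuous_on UNIV (gf V)"
    unfolding gf_def
    by (rule continuous_on_compose2[OF lipschitz_on_continuous_on[OF G] c1]) (auto simp: inH)
  have "compact (gf V ` {0..\<tau>})"
    by (rule compact_continuous_image[OF continuous_on_subset[OF gc]]) auto
  then obtain B where "\<And>z. z \<in> gf V ` {0..\<tau>} \<Longrightarrow> norm z \<le> B"
    using compact_imp_bounded bounded_iff by metis
  then show "\<exists>B. \<forall>s\<in>{0..\<tau>}. norm (gf V s) \<le> B" by blast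
qed

lemma conv_form:
  assumes Vc: "continuous_on {0..\<tau>} V" and VH: "V ` {0..\<tau>} \<subseteq> H0" and t: "t \<in> {0..\<tau>}"
  shows "set_integrable lborel {0..t} (\<lambda>u. Sd u (gf V (t - u)))"
    and "set_integrable lborel {0..t} (\<lambda>s. Sd (t - s) (G (V s + y s)))"
    and "(LINT s:{0..t}|lborel. Sd (t - s) (G (V s + y s))) = (LINT u:{0..t}|lborel. Sd u (gf V (t - u)))"
proof -
  note gc = gf_facts(1)[OF Vc VH]
  obtain B where B: "\<And>s. s \<in> {0..\<tau>} \<Longrightarrow> norm (gf V s) \<le> B" using gf_facts(2)[OF Vc VH] by blast
  have eqf: "(\<lambda>s. indicator {0..t} s *\<^sub>R Sd (t - s) (G (V s + y s))) =
             (\<lambda>s. indicator {0..t} s *\<^sub>R Sd (t - s) (gf V s))"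
    using t by (auto simp: fun_eq_iff indicator_def gf_def clp_id)
  show si: "set_integrable lborel {0..t} (\<lambda>u. Sd u (gf V (t - u)))"
  proof (rule int_bound(1)[OF gc _ beta(2), where C = "K * B"])
    show "0 \<le> t" using t by simp
    fix u :: real assume u: "0 < u" "u \<le> t"
    have "norm (Sd u (gf V (t - u))) \<le> K * u powr (-\<beta>) * norm (gf V (t - u))"
      using Sd_bnd u by simp
    also have "\<dots> \<le> K * u powr (-\<beta>) * B"
      using B[of "t - u"] u t K by (intro mult_left_mono) auto
    finally show "norm (Sd u (gf V (t - u))) \<le> K * B * u powr (-\<beta>)" by (simp add: mult_ac)
  qed
  show "set_integrable lborel {0..t} (\<lambda>s. Sd (t - s) (G (V s + y s)))"
    using si subst_eq(1)[of t "gf V"] unfolding set_integrable_def eqf by simp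
  show "(LINT s:{0..t}|lborel. Sd (t - s) (G (V s + y s))) = (LINT u:{0..t}|lborel. Sd u (gf V (t - u)))"
    using subst_eq(2)[of t "gf V"] unfolding set_lebesgue_integral_def eqf by simp
qed

lemma Phi_facts:
  assumes Vc: "continuous_on {0..\<tau>} V" and VH: "V ` {0..\<tau>} \<subseteq> H0"
  shows "\<And>t. t \<in> {0..\<tau>} \<Longrightarrow> Phi V t \<in> H0"
    and "continuous_on {0..\<tau>} (Phi V)"
proof -
  note gc = gf_facts(1)[OF Vc VH]
  fix t assume t: "t \<in> {0..\<tau>}"
  have "(LINT u:{0..t}|lborel. Sd u (gf V (t - u))) \<in> H0"
    by (rule conv_in_H0[OF gc conv_form(1)[OF Vc VH t]])
  then show "Phi V t \<in> H0"
    unfolding Phi_def conv_form(3)[OF Vc VH t] using T0r[of t] t subspace_add[OF H0(1)] by simp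
next
  note gc = gf_facts(1)[OF Vc VH]
  have c1: "continuous_on {0..\<tau>} (\<lambda>t. LINT u:{0..t}|lborel. Sd u (gf V (t - u)))"
    by (rule conv_cont[OF gc]) (use tau in simp)
  have c2: "continuous_on {0..\<tau>} (\<lambda>t. LINT s:{0..t}|lborel. Sd (t - s) (G (V s + y s)))"
    by (rule continuous_on_cong[THEN iffD1, OF refl _ c1]) (simp add: conv_form(3)[OF Vc VH])
  show "continuous_on {0..\<tau>} (Phi V)"
    unfolding Phi_def[abs_def]
    by (intro continuous_on_add c2 continuous_on_subset[OF T0c]) auto
qed


lemma contr:
  assumes V1c: "continuous_on {0..\<tau>} V1" and V1H: "V1 ` {0..\<tau>} \<subseteq> H0"
    and V2c: "continuous_on {0..\<tau>} V2" and V2H: "V2 ` {0..\<tau>} \<subseteq> H0"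
    and lam: "0 < lam" and D: "0 \<le> D"
    and dif: "\<And>s. s \<in> {0..\<tau>} \<Longrightarrow> norm (V1 s - V2 s) \<le> D * exp (lam * s)"
    and t: "t \<in> {0..\<tau>}"
  shows "norm (Phi V1 t - Phi V2 t) \<le>
    K * L * D * lam powr (-((1 - \<beta>) / 2)) * (\<tau> powr (1 - (\<beta> + (1 - \<beta>) / 2)) / (1 - (\<beta> + (1 - \<beta>) / 2))) * exp (lam * t)"
proof -
  define g where "g = (1 - \<beta>) / 2"
  define a where "a = \<beta> + g"
  have g: "0 < g" "g \<le> 1" and a: "a < 1" "0 < 1 - a" using beta unfolding g_def a_def by (auto simp: field_simps)
  define C where "C = K * L * D * exp (lam * t) * lam powr (-g)"
  have C: "0 \<le> C" using K L_nonneg D by (simp add: C_def)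
  note i1 = conv_form(1)[OF V1c V1H t] and i2 = conv_form(1)[OF V2c V2H t]
  have "Phi V1 t - Phi V2 t = (LINT u:{0..t}|lborel. Sd u (gf V1 (t - u))) - (LINT u:{0..t}|lborel. Sd u (gf V2 (t - u)))"
    by (simp add: Phi_def conv_form(3)[OF V1c V1H t] conv_form(3)[OF V2c V2H t])
  also have "\<dots> = (LINT u:{0..t}|lborel. Sd u (gf V1 (t - u)) - Sd u (gf V2 (t - u)))"
    by (rule set_integral_diff(2)[OF i1 i2, symmetric])
  finally have eq: "Phi V1 t - Phi V2 t = (LINT u:{0..t}|lborel. Sd u (gf V1 (t - u)) - Sd u (gf V2 (t - u)))" .
  have "norm (LINT u:{0..t}|lborel. Sd u (gf V1 (t - u)) - Sd u (gf V2 (t - u))) \<le> C * (t powr (1 - a) / (1 - a))"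
  proof (rule set_int_bound_powr[OF set_integral_diff(1)[OF i1 i2] _ a(1)])
    show "0 \<le> t" using t by simp
    fix u :: real assume u: "0 < u" "u \<le> t"
    define s where "s = t - u"
    have s: "s \<in> {0..\<tau>}" using u t by (auto simp: s_def)
    have cs: "clp s = s" using s by (rule clp_id)
    have H1: "V1 s + y s \<in> H0" using V1H s yr subspace_add[OF H0(1)] by blast
    have H2: "V2 s + y s \<in> H0" using V2H s yr subspace_add[OF H0(1)] by blast
    have "norm (Sd u (gf V1 s) - Sd u (gf V2 s)) = norm (Sd u (gf V1 s - gf V2 s))"
      using u by (simp add: Sd_diff)
    also have "\<dots> \<le> K * u powr (-\<beta>) * norm (gf V1 s - gf V2 s)" using Sd_bnd u by simp
    also have "norm (gf V1 s - gf V2 s) \<le> L * norm ((V1 s + y s) - (V2 s + y s))"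
      unfolding gf_def cs by (rule lipschitz_on_normD[OF G H1 H2])
    also have "norm ((V1 s + y s) - (V2 s + y s)) = norm (V1 s - V2 s)" by simp
    also have "norm (V1 s - V2 s) \<le> D * exp (lam * s)" by (rule dif[OF s])
    also have "exp (lam * s) = exp (lam * t) * exp (- (lam * u))"
      by (simp add: s_def algebra_simps exp_diff exp_minus field_simps)
    also have "exp (- (lam * u)) \<le> (lam * u) powr (-g)"
      using lam u g by (intro exp_le_powr) auto
    also have "(lam * u) powr (-g) = lam powr (-g) * u powr (-g)"
      using lam u by (simp add: powr_mult)
    finally have "norm (Sd u (gf V1 s) - Sd u (gf V2 s)) \<le>
        K * u powr (-\<beta>) * (L * (D * (exp (lam * t) * (lam powr (-g) * u powr (-g)))))"
      using K L_nonneg D lam by (simp add: mult_left_mono mult_right_mono)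
    also have "\<dots> = C * (u powr (-\<beta>) * u powr (-g))" by (simp add: C_def mult_ac)
    also have "u powr (-\<beta>) * u powr (-g) = u powr (-a)"
      by (simp add: a_def powr_add[symmetric])
    finally show "norm (Sd u (gf V1 (t - u)) - Sd u (gf V2 (t - u))) \<le> C * u powr (-a)"
      by (simp add: s_def)
  qed
  also have "C * (t powr (1 - a) / (1 - a)) \<le> C * (\<tau> powr (1 - a) / (1 - a))"
    using t a C by (intro mult_left_mono divide_right_mono powr_mono2) auto
  finally have "norm (Phi V1 t - Phi V2 t) \<le> C * (\<tau> powr (1 - a) / (1 - a))" using eq by simp
  then show ?thesis by (simp add: C_def g_def[symmetric] a_def[symmetric] mult_ac)
qed


lemma ind_cong:
  assumes "\<And>s. s \<in> {0..t} \<Longrightarrow> V1 s = V2 s"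
  shows "(\<lambda>s. indicator {0..t} s *\<^sub>R Sd (t - s) (G (V1 s + y s))) =
         (\<lambda>s. indicator {0..t} s *\<^sub>R Sd (t - s) (G (V2 s + y s)))"
  using assms by (auto simp: fun_eq_iff indicator_def)

lemma Phi_cong:
  assumes "\<And>s. s \<in> {0..t} \<Longrightarrow> V1 s = V2 s"
  shows "Phi V1 t = Phi V2 t"
proof -
  have "integral\<^sup>L lborel (\<lambda>s. indicator {0..t} s *\<^sub>R Sd (t - s) (G (V1 s + y s))) =
        integral\<^sup>L lborel (\<lambda>s. indicator {0..t} s *\<^sub>R Sd (t - s) (G (V2 s + y s)))"
    using ind_cong[OF assms] by (rule arg_cong)
  then show ?thesis by (simp add: Phi_def set_lebesgue_integral_def)
qed

lemma int_cong:
  assumes "\<And>s. s \<in> {0..t} \<Longrightarrow> V1 s = V2 s"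
  shows "set_integrable lborel {0..t} (\<lambda>s. Sd (t - s) (G (V1 s + y s))) \<longleftrightarrow>
         set_integrable lborel {0..t} (\<lambda>s. Sd (t - s) (G (V2 s + y s)))"
proof -
  have "integrable lborel (\<lambda>s. indicator {0..t} s *\<^sub>R Sd (t - s) (G (V1 s + y s))) =
        integrable lborel (\<lambda>s. indicator {0..t} s *\<^sub>R Sd (t - s) (G (V2 s + y s)))"
    using ind_cong[OF assms] by (rule arg_cong)
  then show ?thesis by (simp add: set_integrable_def)
qed

lemma bcf:
  assumes q: "continuous_on {0..\<tau>} q"
  shows "(\<lambda>t. q (clp t)) \<in> bcontfun"
proof -
  have c: "continuous_on UNIV (\<lambda>t. q (clp t))"
    by (rule continuous_on_compose2[OF q clp_cont]) (auto simp: clp_bounds)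
  have "compact (q ` {0..\<tau>})" by (rule compact_continuous_image[OF q]) auto
  then have "bounded (q ` {0..\<tau>})" by (rule compact_imp_bounded)
  moreover have "range (\<lambda>t. q (clp t)) \<subseteq> q ` {0..\<tau>}" using clp_in by auto
  ultimately have "bounded (range (\<lambda>t. q (clp t)))" by (rule bounded_subset)
  with c show ?thesis by (simp add: bcontfun_def)
qed

lemma clp_clp: "clp (clp t) = clp t" by (rule clp_id[OF clp_in])

theorem exists_unique: "\<exists>V. goodV V \<and> (\<forall>W. goodV W \<longrightarrow> (\<forall>t\<in>{0..\<tau>}. W t = V t))"
proof -
  define g where "g = (1 - \<beta>) / 2"
  define A where "A = K * L * (\<tau> powr (1 - (\<beta> + g)) / (1 - (\<beta> + g)))"
  have g: "0 < g" and ag: "0 < 1 - (\<beta> + g)" using beta unfolding g_def by (auto simp: field_simps)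
  have A: "0 \<le> A" using K L_nonneg ag tau by (simp add: A_def)
  define lam where "lam = (2 * A + 1) powr (1 / g)"
  have lam: "0 < lam" using A by (simp add: lam_def)
  have lamg: "lam powr (-g) = 1 / (2 * A + 1)"
    using A g by (simp add: lam_def powr_powr powr_minus_divide)
  define k where "k = A / (2 * A + 1)"
  have k: "0 \<le> k" "k < 1" using A by (auto simp: k_def field_simps)
  define S :: "(real \<Rightarrow>\<^sub>C 'a) set" where "S = PiC UNIV (\<lambda>_. H0)"
  have memS: "U \<in> S \<longleftrightarrow> (\<forall>t. apply_bcontfun U t \<in> H0)" for U
    by (simp add: S_def mem_PiC_iff Pi_def)
  have Scomplete: "Topological_Spaces.complete S" unfolding S_def complete_eq_closed by (rule closed_PiC) (use H0 in auto)
  have Sne: "S \<noteq> {}" using memS[of 0] subspace_0[OF H0(1)] by auto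
  define VU :: "(real \<Rightarrow>\<^sub>C 'a) \<Rightarrow> real \<Rightarrow> 'a" where "VU U s = exp (lam * clp s) *\<^sub>R apply_bcontfun U s" for U s
  define hU where "hU U t = exp (- (lam * clp t)) *\<^sub>R Phi (VU U) (clp t)" for U t
  define Psi where "Psi U = Bcontfun (hU U)" for U
  have VUc: "continuous_on {0..\<tau>} (VU U)" for U
    unfolding VU_def by (intro continuous_intros continuous_on_compose2[OF clp_cont]) auto
  have VUH: "VU U ` {0..\<tau>} \<subseteq> H0" if "U \<in> S" for U
    using that subspace_scale[OF H0(1)] by (auto simp: VU_def memS)
  have hUb: "hU U \<in> bcontfun" if U: "U \<in> S" for U
  proof -
    have "continuous_on {0..\<tau>} (\<lambda>r. exp (- (lam * r)) *\<^sub>R Phi (VU U) r)"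
      by (intro continuous_intros Phi_facts(2)[OF VUc VUH[OF U]])
    from bcf[OF this] show ?thesis by (simp add: hU_def[abs_def])
  qed
  have Psi_app: "apply_bcontfun (Psi U) = hU U" if "U \<in> S" for U
    using hUb[OF that] by (simp add: Psi_def Bcontfun_inverse)
  have PsiS: "Psi U \<in> S" if U: "U \<in> S" for U
    unfolding memS Psi_app[OF U] hU_def
    using Phi_facts(1)[OF VUc VUH[OF U] clp_in] subspace_scale[OF H0(1)] by auto
  have Psi_contr: "dist (Psi U1) (Psi U2) \<le> k * dist U1 U2" if U1: "U1 \<in> S" and U2: "U2 \<in> S" for U1 U2
  proof (rule dist_bound)
    fix t
    define D where "D = dist U1 U2"
    define r where "r = clp t"
    have r: "r \<in> {0..\<tau>}" unfolding r_def by (rule clp_in)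
    have D: "0 \<le> D" by (simp add: D_def)
    have dif: "norm (VU U1 s - VU U2 s) \<le> D * exp (lam * s)" if s: "s \<in> {0..\<tau>}" for s
    proof -
      have "VU U1 s - VU U2 s = exp (lam * s) *\<^sub>R (apply_bcontfun U1 s - apply_bcontfun U2 s)"
        using s by (simp add: VU_def clp_id scaleR_diff_right)
      then have "norm (VU U1 s - VU U2 s) = exp (lam * s) * dist (apply_bcontfun U1 s) (apply_bcontfun U2 s)"
        by (simp add: dist_norm)
      also have "\<dots> \<le> exp (lam * s) * D" unfolding D_def by (intro mult_left_mono dist_bounded) auto
      finally show ?thesis by (simp add: mult_ac)
    qed
    have "norm (Phi (VU U1) r - Phi (VU U2) r) \<le>
      K * L * D * lam powr (-((1 - \<beta>) / 2)) * (\<tau> powr (1 - (\<beta> + (1 - \<beta>) / 2)) / (1 - (\<beta> + (1 - \<beta>) / 2))) * exp (lam * r)"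
      by (rule contr[OF VUc VUH[OF U1] VUc VUH[OF U2] lam D dif r])
    also have "\<dots> = k * D * exp (lam * r)"
      using lamg by (simp add: g_def[symmetric] A_def k_def field_simps)
    finally have n: "norm (Phi (VU U1) r - Phi (VU U2) r) \<le> k * D * exp (lam * r)" .
    have "dist (apply_bcontfun (Psi U1) t) (apply_bcontfun (Psi U2) t)
        = exp (- (lam * r)) * norm (Phi (VU U1) r - Phi (VU U2) r)"
      by (simp add: Psi_app[OF U1] Psi_app[OF U2] hU_def r_def[symmetric] dist_norm
          scaleR_diff_right[symmetric])
    also have "\<dots> \<le> exp (- (lam * r)) * (k * D * exp (lam * r))"
      by (rule mult_left_mono[OF n]) simp
    also have "\<dots> = k * D" by (simp add: exp_minus field_simps)
    finally show "dist (apply_bcontfun (Psi U1) t) (apply_bcontfun (Psi U2) t) \<le> k * dist U1 U2"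
      by (simp add: D_def)
  qed
  have "\<exists>!U\<in>S. Psi U = U"
    by (rule Banach_fix[OF Scomplete Sne k]) (use PsiS Psi_contr in auto)
  then obtain U where U: "U \<in> S" "Psi U = U" and Uuniq: "\<And>U'. U' \<in> S \<Longrightarrow> Psi U' = U' \<Longrightarrow> U' = U"
    by blast
  define V where "V t = exp (lam * t) *\<^sub>R apply_bcontfun U t" for t
  have VVU: "V s = VU U s" if "s \<in> {0..\<tau>}" for s using that by (simp add: V_def VU_def clp_id)
  have goodV_V: "goodV V"
    unfolding goodV_def
  proof (intro conjI ballI)
    show "continuous_on {0..\<tau>} V" unfolding V_def by (intro continuous_intros) auto
    show "V ` {0..\<tau>} \<subseteq> H0" using U(1) subspace_scale[OF H0(1)] by (auto simp: V_def memS)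
    fix t assume t: "t \<in> {0..\<tau>}"
    have cong: "V s = VU U s" if "s \<in> {0..t}" for s using that t by (intro VVU) auto
    show "set_integrable lborel {0..t} (\<lambda>s. Sd (t - s) (G (V s + y s)))"
      using int_cong[OF cong] conv_form(2)[OF VUc VUH[OF U(1)] t] by simp
    have "V t = exp (lam * t) *\<^sub>R apply_bcontfun (Psi U) t" using U(2) by (simp add: V_def)
    also have "\<dots> = Phi (VU U) t" using t by (simp add: Psi_app[OF U(1)] hU_def clp_id exp_minus)
    also have "\<dots> = Phi V t" using Phi_cong[OF cong] by simp
    finally show "V t = Phi V t" .
  qed
  have uniq: "W t = V t" if W: "goodV W" and t: "t \<in> {0..\<tau>}" for W t
  proof -
    have Wc: "continuous_on {0..\<tau>} W" and WH: "W ` {0..\<tau>} \<subseteq> H0"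
      and Wfix: "\<And>t. t \<in> {0..\<tau>} \<Longrightarrow> W t = Phi W t"
      using W by (auto simp: goodV_def)
    define w where "w t = exp (- (lam * clp t)) *\<^sub>R W (clp t)" for t
    have wb: "w \<in> bcontfun"
    proof -
      have "continuous_on {0..\<tau>} (\<lambda>r. exp (- (lam * r)) *\<^sub>R W r)"
        by (intro continuous_intros Wc)
      from bcf[OF this] show ?thesis by (simp add: w_def[abs_def])
    qed
    define UW where "UW = Bcontfun w"
    have UWa: "apply_bcontfun UW = w" using wb by (simp add: UW_def Bcontfun_inverse)
    have UWS: "UW \<in> S" unfolding memS UWa w_def
      using WH clp_in subspace_scale[OF H0(1)] by blast
    have VUW: "VU UW s = W (clp s)" for s
      by (simp add: VU_def UWa w_def clp_clp exp_minus_inverse)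
    have "Psi UW = UW"
    proof (rule bcontfun_eqI)
      fix t
      have cong: "VU UW s = W s" if "s \<in> {0..clp t}" for s
        using that clp_in[of t] by (auto simp: VUW clp_id)
      have "apply_bcontfun (Psi UW) t = exp (- (lam * clp t)) *\<^sub>R Phi (VU UW) (clp t)"
        by (simp add: Psi_app[OF UWS] hU_def)
      also have "Phi (VU UW) (clp t) = Phi W (clp t)" by (rule Phi_cong[OF cong])
      also have "\<dots> = W (clp t)" using Wfix[OF clp_in] by simp
      finally show "apply_bcontfun (Psi UW) t = apply_bcontfun UW t" by (simp add: UWa w_def)
    qed
    then have "UW = U" using Uuniq[OF UWS] by simp
    then have "w t = apply_bcontfun U t" using UWa by simp
    then have "exp (- (lam * t)) *\<^sub>R W t = apply_bcontfun U t" using t by (simp add: w_def clp_id)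
    then have "exp (lam * t) *\<^sub>R (exp (- (lam * t)) *\<^sub>R W t) = V t" by (simp add: V_def)
    then show ?thesis by (simp add: exp_minus)
  qed
  show ?thesis using goodV_V uniq by blast
qed

end

theorem theorem3p5:
  fixes H0 :: "'a::{real_inner, banach, second_countable_topology} set"
    and T0 Sd :: "real \<Rightarrow> 'a \<Rightarrow> 'a"
    and G :: "'a \<Rightarrow> 'a"
    and P :: "'w measure" and \<theta> :: "real \<Rightarrow> 'w \<Rightarrow> 'w"
    and Y :: "'w \<Rightarrow> real \<Rightarrow> 'a"
    and \<omega>A p\<^sub>s \<beta> M :: real
  assumes H0: "subspace H0" "closed H0" "H0 \<noteq> UNIV"
    and semigroup: "c0_semigroup_on H0 T0"
    and pstar: "p\<^sub>s \<ge> 1" and beta: "1 - 1 / p\<^sub>s < \<beta>" "\<beta> < 1"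
    and omegaA: "\<omega>A < 0"
    and Sd_lin: "\<And>t. t > 0 \<Longrightarrow> bounded_linear (Sd t)"
    and Sd_range: "\<And>t x. t > 0 \<Longrightarrow> Sd t x \<in> H0"
    and Sd_bound: "\<And>t x. t > 0 \<Longrightarrow> norm (Sd t x) \<le> M * t powr (- \<beta>) * exp (\<omega>A * t) * norm x"
    and Sd_cont: "\<And>x. continuous_on {0<..} (\<lambda>t. Sd t x)"
    and Sd_semigroup: "\<And>t s x. t \<ge> 0 \<Longrightarrow> s > 0 \<Longrightarrow> T0 t (Sd s x) = Sd (t + s) x"
    and mds: "ergodic_mds P \<theta>"
    and Y_cont: "\<And>\<omega>. continuous_on UNIV (Y \<omega>)"
    and Y_range: "\<And>\<omega> t. Y \<omega> t \<in> H0"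
    and Y_shift: "\<And>\<omega> s. Y (\<theta> s \<omega>) 0 = Y \<omega> s"
    and G_lip: "\<exists>L. L-lipschitz_on H0 G"
  shows "\<forall>\<omega> \<xi> \<tau>. \<xi> \<in> H0 \<longrightarrow> \<tau> > 0 \<longrightarrow>
           (\<exists>V. mild_solution H0 T0 Sd G Y \<theta> \<omega> \<xi> \<tau> V \<and>
                (\<forall>W. mild_solution H0 T0 Sd G Y \<theta> \<omega> \<xi> \<tau> W \<longrightarrow> (\<forall>t\<in>{0..\<tau>}. W t = V t)))"
  proof (intro allI impI)
  fix \<omega> :: 'w and \<xi> :: 'a and \<tau> :: real assume xi: "\<xi> \<in> H0" and tau: "\<tau> > 0"
  obtain L where GL: "L-lipschitz_on H0 G" using G_lip by blast
  have "1 / p\<^sub>s \<le> 1" using pstar by simp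
  then have b0: "0 < \<beta>" using beta(1) by linarith
  have Sdb: "norm (Sd t x) \<le> \<bar>M\<bar> * t powr (-\<beta>) * norm x" if t: "t > 0" for t x
  proof -
    have P: "0 \<le> t powr (-\<beta>) * norm x" by simp
    have e1: "exp (\<omega>A * t) \<le> 1" using omegaA t by (simp add: mult_neg_pos less_imp_le)
    have "norm (Sd t x) \<le> M * t powr (- \<beta>) * exp (\<omega>A * t) * norm x" by (rule Sd_bound[OF t])
    also have "\<dots> = M * (t powr (-\<beta>) * norm x) * exp (\<omega>A * t)" by (simp add: mult_ac)
    also have "\<dots> \<le> \<bar>M\<bar> * (t powr (-\<beta>) * norm x) * exp (\<omega>A * t)"
      by (intro mult_right_mono) (use P in \<open>auto intro: mult_right_mono\<close>)
    also have "\<dots> \<le> \<bar>M\<bar> * (t powr (-\<beta>) * norm x) * 1"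
      by (intro mult_left_mono e1) (use P in auto)
    finally show ?thesis by (simp add: mult_ac)
  qed
  have kern: "kern H0 Sd \<bar>M\<bar> \<beta>"
    by (rule kern.intro) (use H0 b0 beta Sd_lin Sd_range Sd_cont Sdb in auto)
  have x0: "\<xi> - Y \<omega> 0 \<in> H0" using xi Y_range subspace_diff[OF H0(1)] by blast
  have sg: "\<forall>t\<ge>0. bounded_linear (T0 t) \<and> T0 t ` H0 \<subseteq> H0" "\<forall>x\<in>H0. continuous_on {0..} (\<lambda>t. T0 t x)"
    using semigroup by (auto simp: c0_semigroup_on_def)
  interpret fp H0 Sd "\<bar>M\<bar>" \<beta> T0 G "Y \<omega>" "\<xi> - Y \<omega> 0" L \<tau>
  proof (rule fp.intro[OF kern], unfold_locales)
    show "continuous_on {0..} (\<lambda>t. T0 t (\<xi> - Y \<omega> 0))" using sg(2) x0 by blast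
    show "\<And>t. 0 \<le> t \<Longrightarrow> T0 t (\<xi> - Y \<omega> 0) \<in> H0" using sg(1) x0 by blast
    show "L-lipschitz_on H0 G" by (rule GL)
    show "continuous_on UNIV (Y \<omega>)" by (rule Y_cont)
    show "\<And>t. Y \<omega> t \<in> H0" by (rule Y_range)
    show "0 < \<tau>" by (rule tau)
  qed
  have eqv: "mild_solution H0 T0 Sd G Y \<theta> \<omega> \<xi> \<tau> W = goodV W" for W
    by (simp add: mild_solution_def goodV_def Phi_def Y_shift)
  show "\<exists>V. mild_solution H0 T0 Sd G Y \<theta> \<omega> \<xi> \<tau> V \<and>
           (\<forall>W. mild_solution H0 T0 Sd G Y \<theta> \<omega> \<xi> \<tau> W \<longrightarrow> (\<forall>t\<in>{0..\<tau>}. W t = V t))"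
    using exists_unique unfolding eqv .
qed

end
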